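(* Suppose $0<c<1$ and let $b=\tfrac12-c$. For any $x\in\mathbb T$ there exist an integer $n\ge1$ and a point $y\in T^{-n}x$ such that $b\notin O_n^+(y)\cup O^-(y)$.
   Context: $\mathbb T=\mathbb R/\mathbb Z$, $Tx=2x\bmod1$. For $y\in\mathbb T$ and $n\ge1$, $O_n^+(y)=\{y,Ty,\dots,T^{n-1}y\}$ is the finite forward orbit and $O^-(y)=\bigcup_{k\ge1}T^{-k}y$ is the backward orbit. *)

theory Defs
  imports Complex_Main
begin

text \<open>The circle R/Z is represented by its fundamental domain [0,1);
  the canonical projection R -> R/Z is frac.\<close>

definition circle :: "real set" where
  "circle = {0..<1}"

definition doubling :: "real \<Rightarrow> real" where
  "doubling x = frac (2 * x)"

definition fwd_orbit :: "nat \<Rightarrow> real \<Rightarrow> real set" where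
  "fwd_orbit n y = {(doubling ^^ k) y | k. k < n}"

definition bwd_orbit :: "real \<Rightarrow> real set" where
  "bwd_orbit y = {z \<in> circle. \<exists>k\<ge>1. (doubling ^^ k) z = y}"

end

theory Submission
  imports Defs
begin

abbreviation T where "T \<equiv> doubling"

lemma T_circle: "doubling z \<in> circle"
  unfolding doubling_def circle_def by (simp add: frac_lt_1)

lemma T_half: "0 \<le> z \<Longrightarrow> z < 1 \<Longrightarrow> doubling (z/2) = z"
  unfolding doubling_def by (simp add: frac_eq)

lemma T_half1: "0 \<le> z \<Longrightarrow> z < 1 \<Longrightarrow> doubling ((z+1)/2) = z"
proof -
  assume "0 \<le> z" "z < 1"
  have "2 * ((z+1)/2) = z + 1" by simp
  thus ?thesis unfolding doubling_def using \<open>0 \<le> z\<close> \<open>z < 1\<close> by (simp only: frac_1_eq frac_eq)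
qed

lemma orb_circle: "z \<in> circle \<Longrightarrow> (doubling ^^ k) z \<in> circle"
  by (induction k) (auto simp: T_circle)

lemma fp: "(f ^^ m) ((f ^^ n) z) = (f ^^ (m+n)) z"
  by (simp add: funpow_add)

lemma per_inj:
  assumes "p \<ge> 1" "(T ^^ p) z1 = z1" "(T ^^ p) z2 = z2" "T z1 = T z2"
  shows "z1 = z2"
proof -
  obtain q where q: "p = Suc q" using assms(1) by (cases p) auto
  have "z1 = (T ^^ q) (T z1)" using assms(2) q by (metis comp_apply funpow_Suc_right)
  also have "\<dots> = (T ^^ q) (T z2)" using assms(4) by simp
  also have "\<dots> = z2" using assms(3) q by (metis comp_apply funpow_Suc_right)
  finally show ?thesis .
qed

lemma periodic_tail:
  assumes "(T ^^ (Suc i)) b = (T ^^ (Suc j)) b" "i < j" "k \<ge> Suc i"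
  shows "(T ^^ (j-i)) ((T ^^ k) b) = (T ^^ k) b"
proof -
  have "(T ^^ (j-i)) ((T ^^ k) b) = (T ^^ ((k - Suc i) + Suc j)) b"
  proof -
    have "j - i + k = (k - Suc i) + Suc j" using assms by simp
    thus ?thesis by (simp only: fp)
  qed
  also have "\<dots> = (T ^^ (k - Suc i)) ((T ^^ Suc j) b)" by (simp only: fp)
  also have "\<dots> = (T ^^ (k - Suc i)) ((T ^^ Suc i) b)" using assms(1) by simp
  also have "\<dots> = (T ^^ ((k - Suc i) + Suc i)) b" by (simp only: fp)
  also have "\<dots> = (T ^^ k) b" using assms(3) by simp
  finally show ?thesis .
qed

lemma fixed0: "x \<in> circle \<Longrightarrow> doubling x = x \<Longrightarrow> x = 0"
proof -
  assume a: "x \<in> circle" "doubling x = x"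
  have "2*x - of_int \<lfloor>2*x\<rfloor> = x" using a(2) unfolding doubling_def frac_def by simp
  hence "x = of_int \<lfloor>2*x\<rfloor>" by simp
  then obtain m :: int where m: "x = of_int m" by blast
  have "0 \<le> x" "x < 1" using a(1) unfolding circle_def by auto
  with m have "m = 0" by linarith
  with m show ?thesis by simp
qed

lemma gen:
  assumes b: "b \<in> circle" and x: "x \<in> circle" "x \<noteq> 0"
    and u: "T u = x" "u = (T ^^ i) b" and v: "T v = x" "v = (T ^^ j) b"
    and ij: "i < j" and uv: "u \<noteq> v"
  shows "v \<noteq> b" and "\<not> (v/2 \<in> range (\<lambda>k. (T ^^ k) b) \<and> (v+1)/2 \<in> range (\<lambda>k. (T ^^ k) b))"
proof -
  show "v \<noteq> b"
  proof
    assume vb: "v = b"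
    have per: "(T ^^ j) ((T ^^ k) b) = (T ^^ k) b" for k
    proof -
      have "(T ^^ j) ((T ^^ k) b) = (T ^^ k) ((T ^^ j) b)" by (simp add: fp add.commute)
      thus ?thesis using vb v by simp
    qed
    have "u = v" using per_inj[of j u v] per u v ij by simp
    thus False using uv by simp
  qed
next
  show "\<not> (v/2 \<in> range (\<lambda>k. (T ^^ k) b) \<and> (v+1)/2 \<in> range (\<lambda>k. (T ^^ k) b))"
  proof
    assume "v/2 \<in> range (\<lambda>k. (T ^^ k) b) \<and> (v+1)/2 \<in> range (\<lambda>k. (T ^^ k) b)"
    then obtain i1 j1 where w1: "v/2 = (T ^^ i1) b" and w2: "(v+1)/2 = (T ^^ j1) b" by auto
    have vc: "v \<in> circle" using v orb_circle b by simp
    hence v01: "0 \<le> v" "v < 1" unfolding circle_def by auto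
    have Tw1: "T (v/2) = v" and Tw2: "T ((v+1)/2) = v" using v01 T_half T_half1 by auto
    have eqS: "(T ^^ Suc i) b = (T ^^ Suc j) b" using u v by simp
    define p where "p = j - i"
    have p1: "p \<ge> 1" using ij p_def by simp
    have per: "k \<ge> Suc i \<Longrightarrow> (T ^^ p) ((T ^^ k) b) = (T ^^ k) b" for k
      using periodic_tail[OF eqS ij] p_def by simp
    have pv: "(T ^^ p) v = v" using per[of j] ij v by simp
    have idx: "k \<ge> Suc i" if w: "w = (T ^^ k) b" "T w = v" for w k
    proof (rule ccontr)
      assume "\<not> k \<ge> Suc i"
      hence "k < i \<or> k = i" by auto
      thus False
      proof
        assume "k = i"
        hence "w = u" using w u by simp
        hence "v = x" using w u by simp
        hence "T x = x" using v by simp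
        thus False using fixed0 x by simp
      next
        assume ki: "k < i"
        have "(T ^^ Suc k) b = v" using w by simp
        hence "u = (T ^^ (i - Suc k)) ((T ^^ j) b)"
          using u v ki by (metis Suc_leI fp le_add_diff_inverse2)
        hence "u = (T ^^ (i - Suc k + j)) b" by (simp add: fp)
        moreover have "i - Suc k + j \<ge> Suc i" using ij by simp
        ultimately have pu: "(T ^^ p) u = u" using per by simp
        have "u = v" using per_inj[OF p1 pu pv] u v by simp
        thus False using uv by simp
      qed
    qed
    have "(T ^^ p) (v/2) = v/2" using per idx[OF w1 Tw1] w1 by simp
    moreover have "(T ^^ p) ((v+1)/2) = (v+1)/2" using per idx[OF w2 Tw2] w2 by simp
    ultimately have "v/2 = (v+1)/2" using per_inj[OF p1, of "v/2" "(v+1)/2"] Tw1 Tw2 by argo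
    thus False by simp
  qed
qed



lemma good1:
  assumes "b \<in> circle" "y \<in> circle" "T y = x" "b \<noteq> y" "\<forall>k\<ge>1. (T ^^ k) b \<noteq> y"
  shows "\<exists>n::nat. n \<ge> 1 \<and> (\<exists>y \<in> circle. (doubling ^^ n) y = x \<and> b \<notin> fwd_orbit n y \<union> bwd_orbit y)"
proof -
  have f: "b \<notin> fwd_orbit 1 y"
  proof
    assume "b \<in> fwd_orbit 1 y"
    then obtain k :: nat where "k < 1" "b = (T ^^ k) y" unfolding fwd_orbit_def by blast
    hence "b = y" by simp
    thus False using assms(4) by blast
  qed
  have g: "b \<notin> bwd_orbit y"
  proof
    assume "b \<in> bwd_orbit y"
    then obtain k :: nat where "k \<ge> 1" "(T ^^ k) b = y" unfolding bwd_orbit_def by blast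
    thus False using assms(5) by blast
  qed
  have "(T ^^ 1) y = x" using assms(3) by simp
  with f g assms(2) show ?thesis by blast
qed

lemma good2:
  assumes "b \<in> circle" "y \<in> circle" "T (T y) = x" "b \<noteq> y" "b \<noteq> T y" "\<forall>k\<ge>1. (T ^^ k) b \<noteq> y"
  shows "\<exists>n::nat. n \<ge> 1 \<and> (\<exists>y \<in> circle. (doubling ^^ n) y = x \<and> b \<notin> fwd_orbit n y \<union> bwd_orbit y)"
proof (intro exI[of _ 2] conjI bexI[of _ y])
  have "b \<notin> fwd_orbit 2 y"
  proof
    assume "b \<in> fwd_orbit 2 y"
    then obtain k :: nat where "k < 2" "b = (T ^^ k) y" unfolding fwd_orbit_def by auto
    moreover have "k = 0 \<or> k = 1" using \<open>k < 2\<close> by auto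
    ultimately show False using assms(4,5) by auto
  qed
  moreover have "b \<notin> bwd_orbit y"
  proof
    assume "b \<in> bwd_orbit y"
    then obtain k :: nat where "k \<ge> 1" "(T ^^ k) b = y" unfolding bwd_orbit_def by blast
    thus False using assms(6) by blast
  qed
  ultimately show "b \<notin> fwd_orbit 2 y \<union> bwd_orbit y" by blast
  show "(T ^^ 2) y = x" using assms(3) by (simp add: numeral_2_eq_2)
  show "y \<in> circle" by (rule assms(2))
qed simp

lemma notrange: "y \<notin> range (\<lambda>k. (T ^^ k) b) \<Longrightarrow> b \<noteq> y \<and> (\<forall>k\<ge>1. (T ^^ k) b \<noteq> y)"
  by (metis funpow_0 rangeI)

lemma half_zero: "m \<ge> 1 \<Longrightarrow> (T ^^ m) (1/2) = 0"
proof (induction m)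
  case 0 then show ?case by simp
next
  case (Suc m)
  have T0: "T 0 = 0" unfolding doubling_def by simp
  have Th: "T (1/2) = 0" unfolding doubling_def by simp
  show ?case
  proof (cases "m = 0")
    case True then show ?thesis using Th by simp
  next
    case False then show ?thesis using Suc T0 by simp
  qed
qed

lemma good1r:
  assumes "b \<in> circle" "y \<in> circle" "T y = x" "y \<notin> range (\<lambda>k. (T ^^ k) b)"
  shows "\<exists>n::nat. n \<ge> 1 \<and> (\<exists>y \<in> circle. (doubling ^^ n) y = x \<and> b \<notin> fwd_orbit n y \<union> bwd_orbit y)"
  using notrange[OF assms(4)] good1[OF assms(1,2,3)] by blast

lemma good2r:
  assumes "b \<in> circle" "y \<in> circle" "T (T y) = x" "b \<noteq> T y" "y \<notin> range (\<lambda>k. (T ^^ k) b)"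
  shows "\<exists>n::nat. n \<ge> 1 \<and> (\<exists>y \<in> circle. (doubling ^^ n) y = x \<and> b \<notin> fwd_orbit n y \<union> bwd_orbit y)"
  using notrange[OF assms(5)] good2[OF assms(1,2,3) _ assms(4)] by blast

theorem lemma6p3:
  fixes c x :: real
  assumes "0 < c" and "c < 1" and "x \<in> circle"
  shows "\<exists>n::nat. n \<ge> 1 \<and> (\<exists>y \<in> circle. (doubling ^^ n) y = x \<and>
           frac (1/2 - c) \<notin> fwd_orbit n y \<union> bwd_orbit y)"
proof -
  define b where "b = frac (1/2 - c)"
  have bc: "b \<in> circle" unfolding b_def circle_def by (simp add: frac_lt_1)
  have bh: "b \<noteq> 1/2"
  proof
    assume "b = 1/2"
    hence "1/2 - c - of_int \<lfloor>1/2 - c\<rfloor> = 1/2" unfolding b_def frac_def by simp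
    hence "c = - of_int \<lfloor>1/2 - c\<rfloor>" by simp
    then obtain m :: int where "c = of_int m" by (metis of_int_minus)
    with assms(1,2) show False by auto
  qed
  have x01: "0 \<le> x" "x < 1" using assms(3) unfolding circle_def by auto
  let ?R = "range (\<lambda>k. (T ^^ k) b)"
  have circ: "0 \<le> z \<Longrightarrow> z < 1 \<Longrightarrow> z \<in> circle" for z unfolding circle_def by auto
  have "\<exists>n::nat. n \<ge> 1 \<and> (\<exists>y \<in> circle. (doubling ^^ n) y = x \<and> b \<notin> fwd_orbit n y \<union> bwd_orbit y)"
  proof (cases "x/2 \<notin> ?R")
    case True
    have yc: "x/2 \<in> circle" using x01 circ by simp
    show ?thesis by (rule good1r[OF bc yc T_half[OF x01] True])
  next
    case F1: False
    show ?thesis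
    proof (cases "(x+1)/2 \<notin> ?R")
      case True
      have yc: "(x+1)/2 \<in> circle" using x01 circ by simp
      show ?thesis by (rule good1r[OF bc yc T_half1[OF x01] True])
    next
      case F2: False
      obtain i where i: "x/2 = (T ^^ i) b" using F1 by auto
      obtain j where j: "(x+1)/2 = (T ^^ j) b" using F2 by auto
      have ij: "i \<noteq> j" using i j by auto
      show ?thesis
      proof (cases "x = 0")
        case x0: True
        show ?thesis
        proof (cases "\<forall>k\<ge>1. (T ^^ k) b \<noteq> 1/2")
          case True
          have yc: "1/2 \<in> circle" using circ by simp
          have Th: "T (1/2) = x" using x0 unfolding doubling_def by simp
          show ?thesis by (rule good1[OF bc yc Th bh True])
        next
          case False
          have Th: "T (1/2) = 0" unfolding doubling_def by simp
          have q1: "T (1/4) = 1/2" "T (3/4) = 1/2" unfolding doubling_def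
          proof -
            show "frac (2 * (1/4)) = (1/2::real)" by (simp add: frac_eq)
            have "(3/2::real) - 1/2 \<in> \<int>" by simp
            hence "frac (3/2::real) = 1/2" by (simp only: frac_unique_iff) simp
            thus "frac (2 * (3/4)) = (1/2::real)" by simp
          qed
          show ?thesis
          proof (cases "1/4 \<notin> ?R")
            case True
            have yc: "1/4 \<in> circle" using circ by simp
            have TT: "T (T (1/4)) = x" by (simp only: q1 Th x0)
            have bT: "b \<noteq> T (1/4)" unfolding q1 by (rule bh)
            show ?thesis by (rule good2r[OF bc yc TT bT True])
          next
            case G1: False
            show ?thesis
            proof (cases "3/4 \<notin> ?R")
              case True
              have yc: "3/4 \<in> circle" using circ by simp
              have TT: "T (T (3/4)) = x" by (simp only: q1 Th x0)
              have bT: "b \<noteq> T (3/4)" unfolding q1 by (rule bh)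
              show ?thesis by (rule good2r[OF bc yc TT bT True])
            next
              case G2: False
              obtain i' where i': "1/4 = (T ^^ i') b" using G1 by auto
              obtain j' where j': "3/4 = (T ^^ j') b" using G2 by auto
              have ne: "i' \<noteq> j'" using i' j' by auto
              have A: "(T ^^ Suc i') b = 1/2" by (simp only: funpow.simps(2) comp_apply i'[symmetric] q1)
              have B: "(T ^^ Suc j') b = 1/2" by (simp only: funpow.simps(2) comp_apply j'[symmetric] q1)
              have contra: "False" if lt: "a < a'" and Ha: "(T ^^ Suc a) b = 1/2" and Ha': "(T ^^ Suc a') b = 1/2" for a a'
              proof -
                have "(T ^^ Suc a') b = (T ^^ (a' - a)) ((T ^^ Suc a) b)"
                  proof -
                  have "Suc a' = (a' - a) + Suc a" using lt by arith
                  thus ?thesis by (simp only: fp)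
                qed
                also have "\<dots> = 0" unfolding Ha using half_zero lt by simp
                finally show False using Ha' by simp
              qed
              have "i' < j' \<or> j' < i'" using ne by arith
              thus ?thesis using contra[OF _ A B] contra[OF _ B A] by blast
            qed
          qed
        qed
      next
        case xn0: False
        have key: "\<exists>n::nat. n \<ge> 1 \<and> (\<exists>y \<in> circle. (doubling ^^ n) y = x \<and> b \<notin> fwd_orbit n y \<union> bwd_orbit y)"
          if u: "T u = x" "u = (T ^^ i0) b" and v: "T v = x" "v = (T ^^ j0) b" and lt: "i0 < j0" and uv: "u \<noteq> v"
          for u v i0 j0
        proof -
          have vb: "v \<noteq> b" using gen(1)[OF bc assms(3) xn0 u v lt uv] .
          have nr: "\<not> (v/2 \<in> ?R \<and> (v+1)/2 \<in> ?R)" using gen(2)[OF bc assms(3) xn0 u v lt uv] .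
          have v01: "0 \<le> v" "v < 1" using orb_circle[OF bc, of j0] v unfolding circle_def by auto
          show ?thesis
          proof (cases "v/2 \<in> ?R")
            case False
            have yc: "v/2 \<in> circle" using circ v01 by simp
            have TT: "T (T (v/2)) = x" using T_half[OF v01] v by simp
            have bT: "b \<noteq> T (v/2)" using T_half[OF v01] vb by simp
            show ?thesis by (rule good2r[OF bc yc TT bT False])
          next
            case True
            hence "(v+1)/2 \<notin> ?R" using nr by blast
            have yc: "(v+1)/2 \<in> circle" using circ v01 by simp
            have TT: "T (T ((v+1)/2)) = x" using T_half1[OF v01] v by simp
            have bT: "b \<noteq> T ((v+1)/2)" using T_half1[OF v01] vb by simp
            show ?thesis by (rule good2r[OF bc yc TT bT \<open>(v+1)/2 \<notin> ?R\<close>])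
          qed
        qed
        have Tu: "T (x/2) = x" "T ((x+1)/2) = x" using T_half[OF x01] T_half1[OF x01] by auto
        show ?thesis
        proof (cases "i < j")
          case True
          show ?thesis by (rule key[OF Tu(1) i Tu(2) j True]) simp
        next
          case False
          hence "j < i" using ij by simp
          show ?thesis by (rule key[OF Tu(2) j Tu(1) i \<open>j < i\<close>]) simp
        qed
      qed
    qed
  qed
  thus ?thesis unfolding b_def .
qed

end
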